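(* For every real $D>1$ there exist $\alpha,\beta\in(0,\infty]$ with $\alpha\ne\beta$, and finite order SISO deterministic programs $C_1$ and $C_2$ with uniformly distributed secret input, such that $$\lim_{N\to\infty}\frac{IL_\alpha(C_1,N)}{IL_\alpha(C_2,N)}>D\quad\text{and}\quad\lim_{N\to\infty}\frac{IL_\beta(C_1,N)}{IL_\beta(C_2,N)}<\frac1D.$$ In particular, both limits exist.
   Context: A SISO deterministic program $C$ is a family indexed by $N\in\mathbb{N}^+$: for each $N$, a random variable $A$ uniformly distributed on $\mathcal{A}_N=\{0,1,\dots,N-1\}$, and a surjective map $F_N$ from $\mathcal{A}_N$ onto a finite set $\mathcal{O}_N$. The output is $O=F_N(A)$, and $\mathbf{p}_N$ denotes its distribution vector, so $\mathbf{p}_N(o)=|F_N^{-1}(o)|/N$. $C$ is of finite order if $\sup_N\|\mathbf{p}_N\|_0<\infty$, where $\|\mathbf{p}\|_0$ is the number of nonzero entries of $\mathbf{p}$. For a probability vector $\mathbf{p}$ and $\alpha\in(0,\infty]$, the Rényi entropy is $H_\alpha(\mathbf{p})=\frac{1}{1-\alpha}\log\sum_i p_i^\alpha$ for $\alpha\notin\{1,\infty\}$. The limiting cases are $H_1(\mathbf{p})=-\sum_i p_i\log p_i$ and $H_\infty(\mathbf{p})=-\log\max_i p_i$. The $\alpha$-information leakage is $IL_\alpha(C,N)=H_\alpha(\mathbf{p}_N)$. Both programs are evaluated at the same $N$. *)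

theory Defs
  imports Complex_Main "HOL-Library.Extended_Real"
begin

text \<open>A SISO deterministic program is modelled as a family F :: nat => nat => nat:
  for each N, the map F N restricted to A_N = {0..<N} is the program; its output set
  O_N is the image F N ` {..<N}, so F N is surjective onto O_N by construction.
  Outputs are encoded as natural numbers (any finite output set can be so encoded).\<close>

definition prog_outputs :: "(nat \<Rightarrow> nat \<Rightarrow> nat) \<Rightarrow> nat \<Rightarrow> nat set" where
  "prog_outputs F N = F N ` {..<N}"

definition prog_dist :: "(nat \<Rightarrow> nat \<Rightarrow> nat) \<Rightarrow> nat \<Rightarrow> nat \<Rightarrow> real" where
  "prog_dist F N y = real (card {a \<in> {..<N}. F N a = y}) / real N"

definition dist_support_size :: "(nat \<Rightarrow> nat \<Rightarrow> nat) \<Rightarrow> nat \<Rightarrow> nat" where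
  "dist_support_size F N = card {y. prog_dist F N y \<noteq> 0}"

definition finite_order :: "(nat \<Rightarrow> nat \<Rightarrow> nat) \<Rightarrow> bool" where
  "finite_order F \<longleftrightarrow> (\<exists>B::nat. \<forall>N>0. dist_support_size F N \<le> B)"

definition renyi_entropy :: "ereal \<Rightarrow> nat set \<Rightarrow> (nat \<Rightarrow> real) \<Rightarrow> real" where
  "renyi_entropy \<alpha> S p =
     (if \<alpha> = 1 then - (\<Sum>i\<in>S. p i * ln (p i))
      else if \<alpha> = \<infinity> then - ln (Max (p ` S))
      else (1 / (1 - real_of_ereal \<alpha>)) * ln (\<Sum>i\<in>S. p i powr real_of_ereal \<alpha>))"

definition info_leak :: "ereal \<Rightarrow> (nat \<Rightarrow> nat \<Rightarrow> nat) \<Rightarrow> nat \<Rightarrow> real" where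
  "info_leak \<alpha> F N = renyi_entropy \<alpha> (prog_outputs F N) (prog_dist F N)"

end

theory Submission
  imports Defs
begin
definition P :: "nat \<Rightarrow> nat \<Rightarrow> nat \<Rightarrow> nat \<Rightarrow> nat" where
  "P L M N a = (if a < M * (N div L) then a div (N div L) + 1 else 0)"

lemma card_j:
  assumes "0 < k" "j < M" "M * k < N"
  shows "card {a\<in>{..<N}. (if a < M * k then a div k + 1 else 0) = Suc j} = k"
proof -
  have "{a\<in>{..<N}. (if a < M * k then a div k + 1 else 0) = Suc j} = {j*k..<Suc j*k}"
  proof (intro set_eqI iffI)
    fix a assume "a \<in> {a\<in>{..<N}. (if a < M * k then a div k + 1 else 0) = Suc j}"
    then have "a < M*k" "a div k = j" by (auto split: if_splits)
    moreover have "a = (a div k)*k + a mod k" by simp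
    moreover have "a mod k < k" using assms by simp
    ultimately show "a \<in> {j*k..<Suc j*k}" by (simp add: atLeastLessThan_iff)
  next
    fix a assume a: "a \<in> {j*k..<Suc j*k}"
    have "Suc j * k \<le> M * k" using assms by (intro mult_le_mono1) simp
    then have "a < M*k" using a by auto
    moreover have "a div k = j" using a assms
      by (intro div_nat_eqI) (auto simp: mult.commute)
    ultimately show "a \<in> {a\<in>{..<N}. (if a < M * k then a div k + 1 else 0) = Suc j}"
      using assms by auto
  qed
  then show ?thesis by simp
qed

lemma card_0:
  assumes "M * k < N"
  shows "card {a\<in>{..<N}. (if a < M * k then a div k + 1 else 0) = (0::nat)} = N - M*k"
proof -
  have "{a\<in>{..<N}. (if a < M * k then a div k + 1 else 0) = (0::nat)} = {M*k..<N}"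
    by auto
  then show ?thesis by simp
qed

lemma card_other:
  assumes "M < y" "0 < k"
  shows "card {a\<in>{..<N}. (if a < M * k then a div k + 1 else 0) = (y::nat)} = 0"
proof -
  have "{a\<in>{..<N}. (if a < M * k then a div k + 1 else 0) = (y::nat)} = {}"
  proof (rule ccontr)
    assume "\<not> ?thesis"
    then obtain a where "a < M*k" "a div k + 1 = y" using assms by (auto split: if_splits)
    then show False using assms
      by (metis Suc_eq_plus1 less_mult_imp_div_less not_less_eq)
  qed
  then show ?thesis by simp
qed

lemma outputs_eq: "0 < N \<Longrightarrow> prog_outputs F N = {y. prog_dist F N y \<noteq> 0}"
  unfolding prog_outputs_def prog_dist_def
  by (auto simp: card_gt_0_iff)

lemma basics:
  fixes M L N :: nat
  assumes "0 < M" "M < L" "L \<le> N"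
  shows "0 < N div L" "M * (N div L) < N" "(M+1) * (N div L) \<le> N"
proof -
  have "0 < L" using assms by simp
  show k: "0 < N div L" using assms \<open>0 < L\<close> by (simp add: div_greater_zero_iff)
  have "L * (N div L) \<le> N" by (simp add: times_div_less_eq_dividend)
  moreover have "M * (N div L) < L * (N div L)" using k assms by simp
  moreover have "(M+1) * (N div L) \<le> L * (N div L)" using assms by (intro mult_le_mono1) simp
  ultimately show "M * (N div L) < N" "(M+1) * (N div L) \<le> N" by linarith+
qed

lemma dist_P:
  assumes "0 < M" "M < L" "L \<le> N"
  shows "prog_dist (P L M) N y = (if y = 0 then real (N - M * (N div L)) / real N
           else if y \<le> M then real (N div L) / real N else 0)"
proof -
  note b = basics[OF assms]
  have PP: "P L M N = (\<lambda>a. if a < M * (N div L) then a div (N div L) + 1 else 0)"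
    by (rule ext) (simp add: P_def)
  show ?thesis
  proof (cases "y = 0")
    case True then show ?thesis unfolding prog_dist_def PP using card_0[OF b(2)] by simp
  next
    case False
    show ?thesis
    proof (cases "y \<le> M")
      case True
      then obtain j where "y = Suc j" "j < M" using False by (cases y) auto
      then show ?thesis unfolding prog_dist_def PP using card_j[OF b(1) _ b(2)] False True by simp
    next
      case c: False
      then show ?thesis unfolding prog_dist_def PP using card_other[of M y "N div L" N] b(1) False by simp
    qed
  qed
qed

lemma outputs_P:
  assumes "0 < M" "M < L" "L \<le> N"
  shows "prog_outputs (P L M) N = {..M}"
proof -
  note b = basics[OF assms]
  have "0 < N" using assms by simp
  have "0 < N - M * (N div L)" using b by simp
  then show ?thesis unfolding outputs_eq[OF \<open>0 < N\<close>] dist_P[OF assms] using b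
    by (auto simp del: of_nat_diff split: if_splits)
qed

lemma p0_eq:
  assumes "0 < M" "M < L" "L \<le> N"
  shows "real (N - M * (N div L)) / real N = 1 - real M * (real (N div L) / real N)"
proof -
  note b = basics[OF assms]
  have "0 < N" using assms by simp
  have "real (N - M * (N div L)) = real N - real M * real (N div L)" using b(2) by (simp add: of_nat_diff)
  then show ?thesis using \<open>0 < N\<close> by (simp add: field_simps)
qed

lemma leak_inf:
  assumes "0 < M" "M < L" "L \<le> N"
  shows "info_leak \<infinity> (P L M) N = - ln (1 - real M * (real (N div L) / real N))"
proof -
  note b = basics[OF assms]
  have "Max (prog_dist (P L M) N ` {..M}) = prog_dist (P L M) N 0"
  proof (rule Max_eqI)
    show "finite (prog_dist (P L M) N ` {..M})" by simp
    show "prog_dist (P L M) N 0 \<in> prog_dist (P L M) N ` {..M}" by simp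
    fix z assume "z \<in> prog_dist (P L M) N ` {..M}"
    then obtain y where y: "y \<le> M" "z = prog_dist (P L M) N y" by auto
    have "N div L \<le> N - M * (N div L)" using b(3) by simp
    then have "real (N div L) \<le> real (N - M * (N div L))" by (simp only: of_nat_le_iff)
    then have "real (N div L) / real N \<le> real (N - M * (N div L)) / real N"
      by (simp add: divide_right_mono)
    then show "z \<le> prog_dist (P L M) N 0" using y unfolding dist_P[OF assms] by auto
  qed
  then show ?thesis unfolding info_leak_def renyi_entropy_def outputs_P[OF assms]
    using dist_P[OF assms, of 0] p0_eq[OF assms] by simp
qed

lemma leak_half:
  assumes "0 < M" "M < L" "L \<le> N"
  shows "info_leak (ereal (1/2)) (P L M) N =
     2 * ln (sqrt (1 - real M * (real (N div L) / real N)) + real M * sqrt (real (N div L) / real N))"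
proof -
  define x where "x = real (N div L) / real N"
  have x0: "0 \<le> x" unfolding x_def by simp
  have p0: "prog_dist (P L M) N 0 = 1 - real M * x"
    using dist_P[OF assms, of 0] p0_eq[OF assms] unfolding x_def by simp
  have p0pos: "0 \<le> 1 - real M * x" unfolding p0[symmetric] prog_dist_def by simp
  have "{..M} = insert 0 {1..M}" by auto
  then have "(\<Sum>i\<in>{..M}. prog_dist (P L M) N i powr real_of_ereal (ereal (1/2)))
      = prog_dist (P L M) N 0 powr (1/2) + (\<Sum>i\<in>{1..M}. prog_dist (P L M) N i powr (1/2))"
    by simp
  also have "(\<Sum>i\<in>{1..M}. prog_dist (P L M) N i powr (1/2)) = (\<Sum>i\<in>{1..M}. sqrt x)"
    by (rule sum.cong) (auto simp: dist_P[OF assms] x_def powr_half_sqrt)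
  also have "\<dots> = real M * sqrt x" by simp
  finally have S: "(\<Sum>i\<in>{..M}. prog_dist (P L M) N i powr real_of_ereal (ereal (1/2)))
      = sqrt (1 - real M * x) + real M * sqrt x" using p0 p0pos by (simp add: powr_half_sqrt)
  have "ereal (1/2) \<noteq> 1" "ereal (1/2) \<noteq> \<infinity>" by (simp_all add: one_ereal_def)
  then show ?thesis unfolding info_leak_def renyi_entropy_def outputs_P[OF assms] S x_def[symmetric]
    by simp
qed

lemma ratio_lim:
  assumes "0 < L"
  shows "(\<lambda>N. real (N div L) / real N) \<longlonglongrightarrow> 1 / real L"
proof -
  have e: "\<forall>\<^sub>F N in sequentially. 1 / real L - real (N mod L) / (real L * real N) = real (N div L) / real N"
    using eventually_gt_at_top[of 0]
  proof eventually_elim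
    case (elim N)
    have "real N = real L * real (N div L) + real (N mod L)"
      by (metis div_mult_mod_eq of_nat_add of_nat_mult mult.commute)
    then have h: "real (N div L) = (real N - real (N mod L)) / real L" using assms by (simp add: field_simps)
    show ?case unfolding h using elim assms by (simp add: field_simps)
  qed
  have z: "(\<lambda>N. real (N mod L) / (real L * real N)) \<longlonglongrightarrow> 0"
  proof (rule tendsto_sandwich[of "\<lambda>_. 0" _ _ "\<lambda>N. 1 / real N"])
    show "\<forall>\<^sub>F N in sequentially. 0 \<le> real (N mod L) / (real L * real N)" by simp
    show "((\<lambda>_. 0::real) \<longlongrightarrow> 0) sequentially" by simp
    show "\<forall>\<^sub>F N in sequentially. real (N mod L) / (real L * real N) \<le> 1 / real N"
      using eventually_gt_at_top[of 0]
    proof eventually_elim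
      case (elim N)
      have "real (N mod L) \<le> real L" using assms by simp
      then show ?case using elim assms by (simp add: field_simps)
    qed
    show "(\<lambda>N. 1 / real N) \<longlonglongrightarrow> 0" by (rule lim_const_over_n)
  qed
  have "(\<lambda>N. 1 / real L - real (N mod L) / (real L * real N)) \<longlonglongrightarrow> 1 / real L - 0"
    by (intro tendsto_intros z)
  then show ?thesis using e by (simp add: tendsto_cong)
qed

lemma lim_inf:
  assumes "0 < M" "M < L"
  shows "(\<lambda>N. info_leak \<infinity> (P L M) N) \<longlonglongrightarrow> - ln (1 - real M / real L)" (is "?f \<longlonglongrightarrow> _")
proof -
  have e: "\<forall>\<^sub>F N in sequentially. - ln (1 - real M * (real (N div L) / real N)) = info_leak \<infinity> (P L M) N"
    using eventually_ge_at_top[of L] by eventually_elim (simp add: leak_inf[OF assms])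
  have "real M < real L" using assms by simp
  then have "1 - real M * (1 / real L) \<noteq> 0" using assms by (simp add: field_simps)
  then have "(\<lambda>N. - ln (1 - real M * (real (N div L) / real N))) \<longlonglongrightarrow> - ln (1 - real M * (1 / real L))" (is "_ \<longlonglongrightarrow> ?l")
    using assms by (intro tendsto_intros ratio_lim) auto
  then have "?f \<longlonglongrightarrow> ?l" using e by (rule Lim_transform_eventually)
  then show ?thesis by simp
qed

lemma lim_half:
  assumes "0 < M" "M < L"
  shows "(\<lambda>N. info_leak (ereal (1/2)) (P L M) N) \<longlonglongrightarrow>
     2 * ln (sqrt (1 - real M / real L) + real M * sqrt (1 / real L))" (is "?f \<longlonglongrightarrow> _")
proof -
  have e: "\<forall>\<^sub>F N in sequentially. 2 * ln (sqrt (1 - real M * (real (N div L) / real N)) + real M * sqrt (real (N div L) / real N)) = info_leak (ereal (1/2)) (P L M) N"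
    using eventually_ge_at_top[of L] by eventually_elim (simp add: leak_half[OF assms])
  have "0 < real M * sqrt (1 / real L)" using assms by simp
  moreover have "0 \<le> sqrt (1 - real M * (1 / real L))" using assms by simp
  ultimately have "sqrt (1 - real M * (1 / real L)) + real M * sqrt (1 / real L) \<noteq> 0" by linarith
  then have "(\<lambda>N. 2 * ln (sqrt (1 - real M * (real (N div L) / real N)) + real M * sqrt (real (N div L) / real N)))
     \<longlonglongrightarrow> 2 * ln (sqrt (1 - real M * (1 / real L)) + real M * sqrt (1 / real L))" (is "_ \<longlonglongrightarrow> ?l")
    using assms by (intro tendsto_intros ratio_lim) auto
  then have "?f \<longlonglongrightarrow> ?l" using e by (rule Lim_transform_eventually)
  then show ?thesis by simp
qed

lemma fo_P:
  assumes "0 < M" "M < L"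
  shows "finite_order (P L M)"
  unfolding finite_order_def
proof (intro exI allI impI)
  fix N :: nat assume "0 < N"
  have "{y. prog_dist (P L M) N y \<noteq> 0} \<subseteq> {..M}"
  proof
    fix y assume "y \<in> {y. prog_dist (P L M) N y \<noteq> 0}"
    then have "y \<in> prog_outputs (P L M) N" using outputs_eq[OF \<open>0<N\<close>] by simp
    then obtain a where "a < N" "y = P L M N a" unfolding prog_outputs_def by auto
    then show "y \<in> {..M}" unfolding P_def
      by (auto simp: less_mult_imp_div_less Suc_le_eq)
  qed
  then show "dist_support_size (P L M) N \<le> Suc M"
    unfolding dist_support_size_def by (metis card_atMost card_mono finite_atMost)
qed

lemma ln2_bounds: "1/2 \<le> ln (2::real)" "ln (2::real) < 1"
proof -
  have "ln (1/2::real) \<le> 1/2 - 1" by (rule ln_le_minus_one) simp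
  then show "1/2 \<le> ln (2::real)" by (simp add: ln_div)
  show "ln (2::real) < 1" using ln_2_less_1 .
qed

theorem lemma3:
  fixes D :: real
  assumes "D > 1"
  shows "\<exists>\<alpha> \<beta> :: ereal. 0 < \<alpha> \<and> 0 < \<beta> \<and> \<alpha> \<noteq> \<beta> \<and>
           (\<exists>C1 C2 :: nat \<Rightarrow> nat \<Rightarrow> nat. finite_order C1 \<and> finite_order C2 \<and>
              (\<exists>L1. ((\<lambda>N. info_leak \<alpha> C1 N / info_leak \<alpha> C2 N) \<longlongrightarrow> L1) sequentially \<and> L1 > D) \<and>
              (\<exists>L2. ((\<lambda>N. info_leak \<beta> C1 N / info_leak \<beta> C2 N) \<longlongrightarrow> L2) sequentially \<and> L2 < 1 / D))"
proof -
  define n :: nat where "n = nat \<lceil>8*D\<rceil> + 2"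
  define c :: nat where "c = nat \<lceil>exp (2*D)\<rceil> + 1"
  have n8: "8*D + 1 \<le> real n" unfolding n_def by linarith
  have c1: "exp (2*D) \<le> real c" unfolding c_def by linarith
  have n2: "2 \<le> n" unfolding n_def by simp
  have cpos: "1 \<le> c" unfolding c_def by simp
  define M where "M = n * c"
  define L where "L = n * n * c"
  have M0: "0 < M" unfolding M_def using n2 cpos by simp
  have hML: "M < L" unfolding M_def L_def using n2 cpos by simp
  have s: "real M / real L = 1 / real n" unfolding M_def L_def using n2 cpos by (simp add: field_simps)
  have sq: "sqrt (1 / real L) = 1 / (real n * sqrt (real c))" unfolding L_def
    by (simp add: real_sqrt_mult real_sqrt_divide)
  have sc: "0 < sqrt (real c)" using cpos by simp
  have "real M * sqrt (1 / real L) = real c / sqrt (real c)" unfolding sq M_def using n2 sc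
    by (simp add: field_simps)
  then have t: "real M * sqrt (1 / real L) = sqrt (real c)" by (simp add: real_div_sqrt)
  have C1inf: "(\<lambda>N. info_leak \<infinity> (P 2 1) N) \<longlonglongrightarrow> ln 2"
    using lim_inf[of 1 2] by (simp add: ln_div)
  have h2: "sqrt (1/2) + sqrt (1/2) = sqrt (2::real)"
  proof -
    have a: "sqrt 2 * sqrt 2 = (2::real)" by simp
    have b: "sqrt (1/2::real) = 1 / sqrt 2" by (simp add: real_sqrt_divide)
    have "sqrt (1/2) + sqrt (1/2) = 2 / sqrt (2::real)" unfolding b by simp
    also have "\<dots> = sqrt 2" by (rule real_div_sqrt) simp
    finally show ?thesis .
  qed
  have C1half: "(\<lambda>N. info_leak (ereal (1/2)) (P 2 1) N) \<longlonglongrightarrow> ln 2"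
    using lim_half[of 1 2] h2 by (simp add: ln_sqrt)
  have C2inf: "(\<lambda>N. info_leak \<infinity> (P L M) N) \<longlonglongrightarrow> - ln (1 - 1 / real n)"
    using lim_inf[OF M0 hML] s by simp
  have C2half: "(\<lambda>N. info_leak (ereal (1/2)) (P L M) N) \<longlonglongrightarrow> 2 * ln (sqrt (1 - 1 / real n) + sqrt (real c))"
    using lim_half[OF M0 hML] s t by simp
  have a0: "0 < 1 - 1 / real n" "1 - 1 / real n < 1" using n2 by (auto simp: field_simps)
  have lnpos: "0 < - ln (1 - 1 / real n)" using a0 by simp
  have "ln (1 / (1 - 1 / real n)) \<le> 1 / (1 - 1 / real n) - 1"
    using a0 by (intro ln_le_minus_one) simp
  moreover have "1 / (1 - 1 / real n) - 1 = 1 / (real n - 1)" using n2 by (simp add: field_simps)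
  ultimately have lnb: "- ln (1 - 1 / real n) \<le> 1 / (real n - 1)" using a0 by (simp add: ln_div)
  have "D * (1 / (real n - 1)) \<le> 1/8" using n8 assms by (simp add: field_simps)
  moreover have "D * (- ln (1 - 1 / real n)) \<le> D * (1 / (real n - 1))"
    using lnb assms by (intro mult_left_mono) auto
  ultimately have "D * (- ln (1 - 1 / real n)) < ln 2" using ln2_bounds by linarith
  then have L1: "ln 2 / (- ln (1 - 1 / real n)) > D" using lnpos by (simp only: less_divide_eq mult.commute) simp
  have "exp D \<le> sqrt (real c)"
  proof -
    have "exp (2*D) = exp D * exp D" unfolding mult_2 by (rule exp_add)
    then have "sqrt (exp (2*D)) = \<bar>exp D\<bar>" by (simp only: real_sqrt_abs2)
    then have "exp D = sqrt (exp (2*D))" by simp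
    then show ?thesis using c1 real_sqrt_le_mono by presburger
  qed
  then have "ln (exp D) \<le> ln (sqrt (real c))" by (intro ln_mono) auto
  then have "D \<le> ln (sqrt (real c))" by simp
  moreover have "ln (sqrt (real c)) \<le> ln (sqrt (1 - 1 / real n) + sqrt (real c))"
    using cpos a0 by (intro ln_mono) auto
  ultimately have X: "D \<le> ln (sqrt (1 - 1 / real n) + sqrt (real c))" by linarith
  have "ln 2 * D < 1 * D" using ln2_bounds assms by (intro mult_strict_right_mono) auto
  then have "ln 2 * D < 2 * ln (sqrt (1 - 1 / real n) + sqrt (real c))" using X assms by linarith
  then have L2: "ln 2 / (2 * ln (sqrt (1 - 1 / real n) + sqrt (real c))) < 1 / D"
    using assms X by (simp add: field_simps)
  show ?thesis
  proof (intro exI conjI)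
    show "0 < (\<infinity>::ereal)" by simp
    show "0 < ereal (1/2)" by simp
    show "(\<infinity>::ereal) \<noteq> ereal (1/2)" by simp
    show "finite_order (P 2 1)" by (rule fo_P) simp_all
    show "finite_order (P L M)" by (rule fo_P[OF M0 hML])
    show "(\<lambda>N. info_leak \<infinity> (P 2 1) N / info_leak \<infinity> (P L M) N) \<longlonglongrightarrow> ln 2 / (- ln (1 - 1 / real n))"
      using lnpos by (intro tendsto_divide C1inf C2inf) simp
    show "(\<lambda>N. info_leak (ereal (1/2)) (P 2 1) N / info_leak (ereal (1/2)) (P L M) N) \<longlonglongrightarrow>
       ln 2 / (2 * ln (sqrt (1 - 1 / real n) + sqrt (real c)))"
      using X assms by (intro tendsto_divide C1half C2half) simp
  qed (use L1 L2 in auto)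
qed

end
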